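(* Let $M$ be an interpretation and $\varphi$ an $\mathcal{ALC}$-formula. Then $\mathrm{Mod}(\varphi)\setminus[M]_\varphi=\mathrm{Mod}(\mathcal{C}(\varphi,M))$.
   Context: $\mathcal{ALC}$ concepts: $C::=A\mid\neg C\mid(C\sqcap C)\mid\exists r.C$. $\mathcal{ALC}$-formulae: $\phi::=\alpha\mid\neg\phi\mid(\phi\wedge\phi)$, atomic $\alpha::=C(a)\mid r(a,b)\mid(C=\top)$; $\neg\neg\psi$ identified with $\psi$; $\vee,\bot$ usual abbreviations. A literal is an atomic formula or its negation. Interpretations: countable nonempty domain, standard semantics; $\mathrm{Mod}(\varphi)$: interpretations satisfying $\varphi$. $\mathrm{Sub}(\alpha)=\mathrm{Sub}(\neg\alpha)=\{\alpha,\neg\alpha\}$ for atomic $\alpha$; $\mathrm{Sub}(\psi\wedge\psi')=\mathrm{Sub}(\neg(\psi\wedge\psi'))=\{\psi\wedge\psi',\neg(\psi\wedge\psi')\}\cup\mathrm{Sub}(\psi)\cup\mathrm{Sub}(\psi')$. $\mathrm{con}(\varphi)$: smallest set of concepts containing $C$ whenever $(C=\top)$ or $C(a)$ is in $\mathrm{Sub}(\varphi)$, closed under subconcepts of $\sqcap$, $\exists r.\cdot$, and single negation. $\mathrm{ind}(\varphi)$: individual names in $\varphi$. Concept type: $c\subseteq\mathrm{con}(\varphi)$ with $D\in c$ iff $\neg D\notin c$, $D\sqcap E\in c$ iff $\{D,E\}\subseteq c$. Formula type for $\varphi$: $f\subseteq\mathrm{Sub}(\varphi)$ with $\psi\in f$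 iff $\neg\psi\notin f$, $\psi\wedge\psi'\in f$ iff $\{\psi,\psi'\}\subseteq f$. Model candidate $(T,o,f)$: $T$ set of concept types, $o:\mathrm{ind}(\varphi)\to T$, $f$ formula type with $\varphi\in f$, $C(a)\in f\Rightarrow C\in o(a)$, $r(a,b)\in f\Rightarrow\{\neg C\mid\neg\exists r.C\in o(a)\}\subseteq o(b)$. Quasimodel: model candidate where each $\exists r.D\in c\in T$ has $c'\in T$ with $\{D\}\cup\{\neg E\mid\neg\exists r.E\in c\}\subseteq c'$; $\neg C\in c\in T$ implies $(C=\top)\notin f$; $\neg(C=\top)\in f$ implies some $c\in T$ has $C\notin c$; $T\ne\emptyset$. $\mathrm{ftypes}(\varphi)=\{f\mid(T,o,f)$ quasimodel for $\varphi\}$. $\mathrm{qm}(\varphi,I)=(T,o,f)$ with $T=\{c(x)\mid x\in\Delta^I\}$, $c(x)=\{C\in\mathrm{con}(\varphi)\mid x\in C^I\}$, $o(a)=c(a^I)$, $f=\{\psi\in\mathrm{Sub}(\varphi)\mid I\models\psi\}$. $\mathrm{lit}(f)$: literals in $f$. $\mathrm{qfilter}(\varphi,M)=\mathrm{ftypes}(\varphi)\setminus\{f\}$ where $\mathrm{qm}(\varphi,M)=(T,o,f)$. $\mathcal{C}(\varphi,M)=\bigvee_{f\in\mathrm{qfilter}(\varphi,M)}\bigwedge\mathrm{lit}(f)$ if $M\models\varphi$ and $\mathrm{qfilter}(\varphi,M)\ne\emptyset$; $\bot$ if $M\models\varphi$ and $\mathrm{qfilter}(\varphi,M)=\emptyset$;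 $\varphi$ otherwise. $\mathcal{L}_{lit}(\varphi)$: Boolean combinations of atomic formulae occurring in $\varphi$; $M'\equiv_\varphi M$ iff they satisfy the same formulae of $\mathcal{L}_{lit}(\varphi)$; $[M]_\varphi=\{M'\mid M'\equiv_\varphi M\}$. *)

theory Defs
  imports Main "HOL-Library.Countable_Set"
begin

datatype ('c, 'r) concept =
    CName 'c
  | CNeg "('c, 'r) concept"
  | CAnd "('c, 'r) concept" "('c, 'r) concept"
  | CEx 'r "('c, 'r) concept"

datatype ('c, 'r, 'i) atom =
    CAs "('c, 'r) concept" 'i
  | RAs 'r 'i 'i
  | CEq "('c, 'r) concept"         (* C = top *)

datatype ('c, 'r, 'i) formula =
    Atom "('c, 'r, 'i) atom"
  | Neg "('c, 'r, 'i) formula"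
  | Conj "('c, 'r, 'i) formula" "('c, 'r, 'i) formula"

text \<open>Single negation modulo the identification of double negations.\<close>
fun cneg :: "('c, 'r) concept \<Rightarrow> ('c, 'r) concept" where
  "cneg (CNeg C) = C"
| "cneg C = CNeg C"

fun neg :: "('c, 'r, 'i) formula \<Rightarrow> ('c, 'r, 'i) formula" where
  "neg (Neg \<psi>) = \<psi>"
| "neg \<psi> = Neg \<psi>"

definition Disj :: "('c, 'r, 'i) formula \<Rightarrow> ('c, 'r, 'i) formula \<Rightarrow> ('c, 'r, 'i) formula" where
  "Disj \<psi> \<chi> = Neg (Conj (Neg \<psi>) (Neg \<chi>))"

definition Bot :: "('c, 'r, 'i) formula" where
  "Bot = Conj (Atom (CEq (CName undefined))) (Neg (Atom (CEq (CName undefined))))"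

definition Top :: "('c, 'r, 'i) formula" where
  "Top = Neg Bot"

text \<open>A fixed enumeration of a finite set (any enumeration will do).\<close>
definition enum_set :: "'a set \<Rightarrow> 'a list" where
  "enum_set S = (SOME xs. set xs = S \<and> distinct xs)"

definition BigConj :: "('c, 'r, 'i) formula set \<Rightarrow> ('c, 'r, 'i) formula" where
  "BigConj S = foldr Conj (enum_set S) Top"

definition BigDisj :: "('c, 'r, 'i) formula set \<Rightarrow> ('c, 'r, 'i) formula" where
  "BigDisj S = foldr Disj (enum_set S) Bot"

record ('c, 'r, 'i, 'd) interp =
  idom :: "'d set"
  cint :: "'c \<Rightarrow> 'd set"
  rint :: "'r \<Rightarrow> ('d \<times> 'd) set"
  iint :: "'i \<Rightarrow> 'd"

definition wf_interp :: "('c, 'r, 'i, 'd) interp \<Rightarrow> bool" where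
  "wf_interp I \<longleftrightarrow> idom I \<noteq> {} \<and> countable (idom I)
     \<and> (\<forall>A. cint I A \<subseteq> idom I) \<and> (\<forall>r. rint I r \<subseteq> idom I \<times> idom I)
     \<and> (\<forall>a. iint I a \<in> idom I)"

fun csem :: "('c, 'r, 'i, 'd) interp \<Rightarrow> ('c, 'r) concept \<Rightarrow> 'd set" where
  "csem I (CName A) = cint I A"
| "csem I (CNeg C) = idom I - csem I C"
| "csem I (CAnd C D) = csem I C \<inter> csem I D"
| "csem I (CEx r C) = {x \<in> idom I. \<exists>y. (x, y) \<in> rint I r \<and> y \<in> csem I C}"

fun asat :: "('c, 'r, 'i, 'd) interp \<Rightarrow> ('c, 'r, 'i) atom \<Rightarrow> bool" where
  "asat I (CAs C a) \<longleftrightarrow> iint I a \<in> csem I C"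
| "asat I (RAs r a b) \<longleftrightarrow> (iint I a, iint I b) \<in> rint I r"
| "asat I (CEq C) \<longleftrightarrow> csem I C = idom I"

fun fsat :: "('c, 'r, 'i, 'd) interp \<Rightarrow> ('c, 'r, 'i) formula \<Rightarrow> bool" where
  "fsat I (Atom \<alpha>) = asat I \<alpha>"
| "fsat I (Neg \<psi>) = (\<not> fsat I \<psi>)"
| "fsat I (Conj \<psi> \<chi>) = (fsat I \<psi> \<and> fsat I \<chi>)"

definition Mod :: "('c, 'r, 'i) formula \<Rightarrow> ('c, 'r, 'i, 'd) interp set" where
  "Mod \<phi> = {I. wf_interp I \<and> fsat I \<phi>}"

fun Sub :: "('c, 'r, 'i) formula \<Rightarrow> ('c, 'r, 'i) formula set" where
  "Sub (Atom \<alpha>) = {Atom \<alpha>, Neg (Atom \<alpha>)}"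
| "Sub (Conj \<psi> \<chi>) = {Conj \<psi> \<chi>, Neg (Conj \<psi> \<chi>)} \<union> Sub \<psi> \<union> Sub \<chi>"
| "Sub (Neg \<psi>) = {Neg \<psi>, neg (Neg \<psi>)} \<union> Sub \<psi>"

inductive_set con :: "('c, 'r, 'i) formula \<Rightarrow> ('c, 'r) concept set" for \<phi> where
  con_eq: "Atom (CEq C) \<in> Sub \<phi> \<Longrightarrow> C \<in> con \<phi>"
| con_as: "Atom (CAs C a) \<in> Sub \<phi> \<Longrightarrow> C \<in> con \<phi>"
| con_and1: "CAnd C D \<in> con \<phi> \<Longrightarrow> C \<in> con \<phi>"
| con_and2: "CAnd C D \<in> con \<phi> \<Longrightarrow> D \<in> con \<phi>"
| con_ex: "CEx r C \<in> con \<phi> \<Longrightarrow> C \<in> con \<phi>"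
| con_neg: "C \<in> con \<phi> \<Longrightarrow> cneg C \<in> con \<phi>"

fun atom_inds :: "('c, 'r, 'i) atom \<Rightarrow> 'i set" where
  "atom_inds (CAs C a) = {a}"
| "atom_inds (RAs r a b) = {a, b}"
| "atom_inds (CEq C) = {}"

fun atoms :: "('c, 'r, 'i) formula \<Rightarrow> ('c, 'r, 'i) atom set" where
  "atoms (Atom \<alpha>) = {\<alpha>}"
| "atoms (Neg \<psi>) = atoms \<psi>"
| "atoms (Conj \<psi> \<chi>) = atoms \<psi> \<union> atoms \<chi>"

definition ind :: "('c, 'r, 'i) formula \<Rightarrow> 'i set" where
  "ind \<phi> = (\<Union>\<alpha>\<in>atoms \<phi>. atom_inds \<alpha>)"

definition concept_type :: "('c, 'r, 'i) formula \<Rightarrow> ('c, 'r) concept set \<Rightarrow> bool" where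
  "concept_type \<phi> c \<longleftrightarrow> c \<subseteq> con \<phi>
     \<and> (\<forall>D\<in>con \<phi>. D \<in> c \<longleftrightarrow> cneg D \<notin> c)
     \<and> (\<forall>D E. CAnd D E \<in> con \<phi> \<longrightarrow> (CAnd D E \<in> c \<longleftrightarrow> D \<in> c \<and> E \<in> c))"

definition formula_type :: "('c, 'r, 'i) formula \<Rightarrow> ('c, 'r, 'i) formula set \<Rightarrow> bool" where
  "formula_type \<phi> f \<longleftrightarrow> f \<subseteq> Sub \<phi>
     \<and> (\<forall>\<psi>\<in>Sub \<phi>. \<psi> \<in> f \<longleftrightarrow> neg \<psi> \<notin> f)
     \<and> (\<forall>\<psi> \<chi>. Conj \<psi> \<chi> \<in> Sub \<phi> \<longrightarrow> (Conj \<psi> \<chi> \<in> f \<longleftrightarrow> \<psi> \<in> f \<and> \<chi> \<in> f))"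

definition model_candidate ::
  "('c, 'r, 'i) formula \<Rightarrow> ('c, 'r) concept set set \<Rightarrow> ('i \<Rightarrow> ('c, 'r) concept set)
     \<Rightarrow> ('c, 'r, 'i) formula set \<Rightarrow> bool" where
  "model_candidate \<phi> T oo f \<longleftrightarrow>
     (\<forall>c\<in>T. concept_type \<phi> c)
     \<and> (\<forall>a\<in>ind \<phi>. oo a \<in> T)
     \<and> formula_type \<phi> f \<and> \<phi> \<in> f
     \<and> (\<forall>C a. Atom (CAs C a) \<in> f \<longrightarrow> C \<in> oo a)
     \<and> (\<forall>r a b. Atom (RAs r a b) \<in> f \<longrightarrow>
          {cneg C | C. CNeg (CEx r C) \<in> oo a} \<subseteq> oo b)"

definition quasimodel ::
  "('c, 'r, 'i) formula \<Rightarrow> ('c, 'r) concept set set \<Rightarrow> ('i \<Rightarrow> ('c, 'r) concept set)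
     \<Rightarrow> ('c, 'r, 'i) formula set \<Rightarrow> bool" where
  "quasimodel \<phi> T oo f \<longleftrightarrow> model_candidate \<phi> T oo f
     \<and> (\<forall>c\<in>T. \<forall>r D. CEx r D \<in> c \<longrightarrow>
          (\<exists>c'\<in>T. {D} \<union> {cneg E | E. CNeg (CEx r E) \<in> c} \<subseteq> c'))
     \<and> (\<forall>c\<in>T. \<forall>C. cneg C \<in> c \<longrightarrow> Atom (CEq C) \<notin> f)
     \<and> (\<forall>C. Neg (Atom (CEq C)) \<in> f \<longrightarrow> (\<exists>c\<in>T. C \<notin> c))
     \<and> T \<noteq> {}"

definition ftypes :: "('c, 'r, 'i) formula \<Rightarrow> ('c, 'r, 'i) formula set set" where
  "ftypes \<phi> = {f. \<exists>T oo. quasimodel \<phi> T oo f}"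

definition ctype_of :: "('c, 'r, 'i) formula \<Rightarrow> ('c, 'r, 'i, 'd) interp \<Rightarrow> 'd \<Rightarrow> ('c, 'r) concept set" where
  "ctype_of \<phi> I x = {C \<in> con \<phi>. x \<in> csem I C}"

definition qm :: "('c, 'r, 'i) formula \<Rightarrow> ('c, 'r, 'i, 'd) interp
     \<Rightarrow> ('c, 'r) concept set set \<times> ('i \<Rightarrow> ('c, 'r) concept set) \<times> ('c, 'r, 'i) formula set" where
  "qm \<phi> I = (ctype_of \<phi> I ` idom I,
              (\<lambda>a. ctype_of \<phi> I (iint I a)),
              {\<psi> \<in> Sub \<phi>. fsat I \<psi>})"

fun is_literal :: "('c, 'r, 'i) formula \<Rightarrow> bool" where
  "is_literal (Atom \<alpha>) = True"
| "is_literal (Neg (Atom \<alpha>)) = True"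
| "is_literal _ = False"

definition lit :: "('c, 'r, 'i) formula set \<Rightarrow> ('c, 'r, 'i) formula set" where
  "lit f = {\<psi> \<in> f. is_literal \<psi>}"

definition qfilter :: "('c, 'r, 'i) formula \<Rightarrow> ('c, 'r, 'i, 'd) interp \<Rightarrow> ('c, 'r, 'i) formula set set" where
  "qfilter \<phi> M = ftypes \<phi> - {snd (snd (qm \<phi> M))}"

definition Cform :: "('c, 'r, 'i) formula \<Rightarrow> ('c, 'r, 'i, 'd) interp \<Rightarrow> ('c, 'r, 'i) formula" where
  "Cform \<phi> M =
     (if fsat M \<phi> then
        (if qfilter \<phi> M \<noteq> {} then BigDisj ((\<lambda>f. BigConj (lit f)) ` qfilter \<phi> M) else Bot)
      else \<phi>)"

definition L_lit :: "('c, 'r, 'i) formula \<Rightarrow> ('c, 'r, 'i) formula set" where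
  "L_lit \<phi> = {\<psi>. atoms \<psi> \<subseteq> atoms \<phi>}"

definition lit_equiv :: "('c, 'r, 'i) formula \<Rightarrow> ('c, 'r, 'i, 'd) interp \<Rightarrow> ('c, 'r, 'i, 'd) interp \<Rightarrow> bool" where
  "lit_equiv \<phi> M' M \<longleftrightarrow> (\<forall>\<psi>\<in>L_lit \<phi>. fsat M' \<psi> \<longleftrightarrow> fsat M \<psi>)"

definition eq_class :: "('c, 'r, 'i) formula \<Rightarrow> ('c, 'r, 'i, 'd) interp \<Rightarrow> ('c, 'r, 'i, 'd) interp set" where
  "eq_class \<phi> M = {M'. wf_interp M' \<and> lit_equiv \<phi> M' M}"

end

theory Submission
  imports Defs
begin

lemma neg_sem[simp]: "fsat I (neg \<psi>) = (\<not> fsat I \<psi>)"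
  by (cases \<psi>) auto

lemma Sub_self: "\<psi> \<in> Sub \<psi>"
  by (cases \<psi>) auto

lemma Sub_neg_closed: "\<chi> \<in> Sub \<phi> \<Longrightarrow> neg \<chi> \<in> Sub \<phi>"
  by (induction \<phi> arbitrary: \<chi>) (auto simp: Sub_self)

lemma Sub_trans: "\<chi> \<in> Sub \<phi> \<Longrightarrow> Sub \<chi> \<subseteq> Sub \<phi>"
  by (induction \<phi> arbitrary: \<chi>) auto

lemma Sub_Conj: "Conj \<psi> \<chi> \<in> Sub \<phi> \<Longrightarrow> \<psi> \<in> Sub \<phi> \<and> \<chi> \<in> Sub \<phi>"
  using Sub_trans[of "Conj \<psi> \<chi>" \<phi>] Sub_self[of \<psi>] Sub_self[of \<chi>] by auto

lemma Sub_Neg: "Neg \<psi> \<in> Sub \<phi> \<Longrightarrow> \<psi> \<in> Sub \<phi>"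
  using Sub_trans[of "Neg \<psi>" \<phi>] Sub_self[of \<psi>] by auto

lemma Sub_finite: "finite (Sub \<phi>)"
  by (induction \<phi>) auto

lemma atoms_Sub: "\<psi> \<in> Sub \<phi> \<Longrightarrow> atoms \<psi> \<subseteq> atoms \<phi>"
  by (induction \<phi> arbitrary: \<psi>) auto

lemma atom_in_Sub: "\<alpha> \<in> atoms \<phi> \<Longrightarrow> Atom \<alpha> \<in> Sub \<phi>"
  by (induction \<phi>) auto

lemma agree_atoms:
  assumes "\<forall>\<alpha>\<in>atoms \<phi>. asat M' \<alpha> = asat M \<alpha>" "atoms \<psi> \<subseteq> atoms \<phi>"
  shows "fsat M' \<psi> = fsat M \<psi>"
  using assms(2) by (induction \<psi>) (use assms(1) in auto)

lemma csem_sub: "wf_interp I \<Longrightarrow> csem I C \<subseteq> idom I"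
  by (induction C) (auto simp: wf_interp_def)

lemma cneg_sem: "wf_interp I \<Longrightarrow> x \<in> idom I \<Longrightarrow> (x \<in> csem I (cneg C)) = (x \<notin> csem I C)"
  using csem_sub by (cases C) auto

lemma fsat_Bot[simp]: "\<not> fsat I Bot"
  by (simp add: Bot_def)

lemma fsat_Top[simp]: "fsat I Top"
  by (simp add: Top_def)

lemma enum_set_ok: "finite S \<Longrightarrow> set (enum_set S) = S"
  unfolding enum_set_def
  by (metis (mono_tags, lifting) finite_distinct_list someI_ex)

lemma fsat_BigConj: "finite S \<Longrightarrow> fsat I (BigConj S) = (\<forall>\<psi>\<in>S. fsat I \<psi>)"
proof -
  have "fsat I (foldr Conj xs Top) = (\<forall>\<psi>\<in>set xs. fsat I \<psi>)" for xs
    by (induction xs) auto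
  then show "finite S \<Longrightarrow> ?thesis" using enum_set_ok unfolding BigConj_def by metis
qed

lemma fsat_BigDisj: "finite S \<Longrightarrow> fsat I (BigDisj S) = (\<exists>\<psi>\<in>S. fsat I \<psi>)"
proof -
  have "fsat I (foldr Disj xs Bot) = (\<exists>\<psi>\<in>set xs. fsat I \<psi>)" for xs
    by (induction xs) (auto simp: Disj_def)
  then show "finite S \<Longrightarrow> ?thesis" using enum_set_ok unfolding BigDisj_def by metis
qed

lemma ctype_concept_type:
  assumes "wf_interp I" "x \<in> idom I"
  shows "concept_type \<phi> (ctype_of \<phi> I x)"
  unfolding concept_type_def
proof (intro conjI ballI allI impI)
  show "ctype_of \<phi> I x \<subseteq> con \<phi>" unfolding ctype_of_def by auto
  fix D assume "D \<in> con \<phi>"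
  then have "cneg D \<in> con \<phi>" by (rule con_neg)
  then show "(D \<in> ctype_of \<phi> I x) = (cneg D \<notin> ctype_of \<phi> I x)"
    using \<open>D \<in> con \<phi>\<close> cneg_sem[OF assms, of D] unfolding ctype_of_def by simp
next
  fix D E assume "CAnd D E \<in> con \<phi>"
  then have "D \<in> con \<phi>" "E \<in> con \<phi>" by (auto intro: con_and1 con_and2)
  then show "(CAnd D E \<in> ctype_of \<phi> I x) = (D \<in> ctype_of \<phi> I x \<and> E \<in> ctype_of \<phi> I x)"
    using \<open>CAnd D E \<in> con \<phi>\<close> unfolding ctype_of_def by simp
qed

lemma qm_quasi:
  assumes wf: "wf_interp I" and sat: "fsat I \<phi>"
  shows "quasimodel \<phi> (ctype_of \<phi> I ` idom I) (\<lambda>a. ctype_of \<phi> I (iint I a)) {\<psi> \<in> Sub \<phi>. fsat I \<psi>}"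
proof -
  have dom: "\<And>a. iint I a \<in> idom I" "\<And>r x y. (x,y) \<in> rint I r \<Longrightarrow> x \<in> idom I \<and> y \<in> idom I"
    using wf unfolding wf_interp_def by auto
  have ft: "formula_type \<phi> {\<psi> \<in> Sub \<phi>. fsat I \<psi>}"
    unfolding formula_type_def
  proof (intro conjI ballI allI impI)
    show "{\<psi> \<in> Sub \<phi>. fsat I \<psi>} \<subseteq> Sub \<phi>" by blast
    fix \<psi> assume "\<psi> \<in> Sub \<phi>"
    then show "(\<psi> \<in> {\<psi> \<in> Sub \<phi>. fsat I \<psi>}) = (neg \<psi> \<notin> {\<psi> \<in> Sub \<phi>. fsat I \<psi>})"
      using Sub_neg_closed[of \<psi> \<phi>] by simp
  next
    fix \<psi> \<chi> assume "Conj \<psi> \<chi> \<in> Sub \<phi>"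
    then show "(Conj \<psi> \<chi> \<in> {\<psi> \<in> Sub \<phi>. fsat I \<psi>}) =
       (\<psi> \<in> {\<psi> \<in> Sub \<phi>. fsat I \<psi>} \<and> \<chi> \<in> {\<psi> \<in> Sub \<phi>. fsat I \<psi>})"
      using Sub_Conj[of \<psi> \<chi> \<phi>] by simp
  qed
  have exneg: "cneg E \<in> con \<phi>" if "CNeg (CEx r E) \<in> con \<phi>" for r E
  proof -
    have "cneg (CNeg (CEx r E)) \<in> con \<phi>" using con_neg[OF that] .
    then have "CEx r E \<in> con \<phi>" by simp
    then have "E \<in> con \<phi>" by (rule con_ex)
    then show ?thesis by (rule con_neg)
  qed
  have mc: "model_candidate \<phi> (ctype_of \<phi> I ` idom I) (\<lambda>a. ctype_of \<phi> I (iint I a)) {\<psi> \<in> Sub \<phi>. fsat I \<psi>}"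
    unfolding model_candidate_def
  proof (intro conjI allI impI ballI)
    show "concept_type \<phi> c" if "c \<in> ctype_of \<phi> I ` idom I" for c
      using that ctype_concept_type[OF wf] by auto
    show "ctype_of \<phi> I (iint I a) \<in> ctype_of \<phi> I ` idom I" for a using dom by auto
    show "formula_type \<phi> {\<psi> \<in> Sub \<phi>. fsat I \<psi>}" by (rule ft)
    show "\<phi> \<in> {\<psi> \<in> Sub \<phi>. fsat I \<psi>}" using sat Sub_self by auto
    show "C \<in> ctype_of \<phi> I (iint I a)" if "Atom (CAs C a) \<in> {\<psi> \<in> Sub \<phi>. fsat I \<psi>}" for C a
      using that con_as unfolding ctype_of_def by auto
    show "{cneg C |C. CNeg (CEx r C) \<in> ctype_of \<phi> I (iint I a)} \<subseteq> ctype_of \<phi> I (iint I b)"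
      if "Atom (RAs r a b) \<in> {\<psi> \<in> Sub \<phi>. fsat I \<psi>}" for r a b
    proof
      fix z assume "z \<in> {cneg C |C. CNeg (CEx r C) \<in> ctype_of \<phi> I (iint I a)}"
      then obtain C where z: "z = cneg C" and C: "CNeg (CEx r C) \<in> ctype_of \<phi> I (iint I a)" by blast
      have c1: "CNeg (CEx r C) \<in> con \<phi>" "iint I a \<notin> csem I (CEx r C)"
        using C unfolding ctype_of_def by auto
      have ab: "(iint I a, iint I b) \<in> rint I r" using that by simp
      have "iint I b \<notin> csem I C" using c1(2) ab dom(1)[of a] by auto
      then have "iint I b \<in> csem I (cneg C)" using cneg_sem[OF wf dom(1)[of b]] by simp
      then show "z \<in> ctype_of \<phi> I (iint I b)" using exneg[OF c1(1)] z unfolding ctype_of_def by simp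
    qed
  qed
  show ?thesis unfolding quasimodel_def
  proof (intro conjI ballI allI impI)
    show "model_candidate \<phi> (ctype_of \<phi> I ` idom I) (\<lambda>a. ctype_of \<phi> I (iint I a)) {\<psi> \<in> Sub \<phi>. fsat I \<psi>}"
      by (rule mc)
    fix c r D
    assume c: "c \<in> ctype_of \<phi> I ` idom I" and ex: "CEx r D \<in> c"
    then obtain x where x: "x \<in> idom I" "c = ctype_of \<phi> I x" by auto
    then obtain y where y: "(x,y) \<in> rint I r" "y \<in> csem I D" "CEx r D \<in> con \<phi>"
      using ex unfolding ctype_of_def by auto
    have yd: "y \<in> idom I" using dom y by auto
    have "{D} \<union> {cneg E |E. CNeg (CEx r E) \<in> c} \<subseteq> ctype_of \<phi> I y"
      using y x yd exneg cneg_sem[OF wf yd] con_ex unfolding ctype_of_def by auto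
    then show "\<exists>c'\<in>ctype_of \<phi> I ` idom I. {D} \<union> {cneg E |E. CNeg (CEx r E) \<in> c} \<subseteq> c'"
      using yd by auto
  next
    fix c C
    assume c: "c \<in> ctype_of \<phi> I ` idom I" and n: "cneg C \<in> c"
    then obtain x where x: "x \<in> idom I" "c = ctype_of \<phi> I x" by auto
    then show "Atom (CEq C) \<notin> {\<psi> \<in> Sub \<phi>. fsat I \<psi>}"
      using n cneg_sem[OF wf x(1)] unfolding ctype_of_def by auto
  next
    fix C
    assume "Neg (Atom (CEq C)) \<in> {\<psi> \<in> Sub \<phi>. fsat I \<psi>}"
    then have "csem I C \<noteq> idom I" by auto
    then obtain x where "x \<in> idom I" "x \<notin> csem I C" using csem_sub[OF wf] by blast
    then show "\<exists>c\<in>ctype_of \<phi> I ` idom I. C \<notin> c" unfolding ctype_of_def by auto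
  next
    show "ctype_of \<phi> I ` idom I \<noteq> {}" using wf unfolding wf_interp_def by auto
  qed
qed

lemma qm_ftype: "wf_interp I \<Longrightarrow> fsat I \<phi> \<Longrightarrow> {\<psi> \<in> Sub \<phi>. fsat I \<psi>} \<in> ftypes \<phi>"
  unfolding ftypes_def using qm_quasi by blast

lemma ftype_sat:
  assumes "formula_type \<phi> f" "\<forall>\<psi>\<in>lit f. fsat I \<psi>" "\<psi> \<in> Sub \<phi>"
  shows "\<psi> \<in> f \<longleftrightarrow> fsat I \<psi>"
  using assms(3)
proof (induction \<psi>)
  case (Atom \<alpha>)
  have "Neg (Atom \<alpha>) \<in> Sub \<phi>" using Sub_neg_closed[OF Atom] by simp
  then show ?case using assms(1,2) Atom unfolding formula_type_def lit_def
    by (metis (mono_tags, lifting) fsat.simps(2) is_literal.simps(1,2) mem_Collect_eq neg.simps(2))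
next
  case (Neg \<psi>)
  have s: "\<psi> \<in> Sub \<phi>" using Sub_Neg[OF Neg.prems] .
  have ih: "\<psi> \<in> f \<longleftrightarrow> fsat I \<psi>" using Neg.IH[OF s] .
  have "Neg \<psi> \<in> f \<longleftrightarrow> neg (Neg \<psi>) \<notin> f"
    using assms(1) Neg.prems unfolding formula_type_def by blast
  then show ?case using ih by simp
next
  case (Conj \<psi>1 \<psi>2)
  have s: "\<psi>1 \<in> Sub \<phi>" "\<psi>2 \<in> Sub \<phi>" using Sub_Conj[OF Conj.prems] by auto
  have "Conj \<psi>1 \<psi>2 \<in> f \<longleftrightarrow> \<psi>1 \<in> f \<and> \<psi>2 \<in> f"
    using assms(1) Conj.prems unfolding formula_type_def by blast
  then show ?case using Conj.IH s by simp
qed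

lemma f_eq_equiv:
  assumes "{\<psi> \<in> Sub \<phi>. fsat M' \<psi>} = {\<psi> \<in> Sub \<phi>. fsat M \<psi>}"
  shows "lit_equiv \<phi> M' M"
proof -
  have "\<forall>\<alpha>\<in>atoms \<phi>. asat M' \<alpha> = asat M \<alpha>"
    using assms atom_in_Sub by (metis (mono_tags, lifting) fsat.simps(1) mem_Collect_eq)
  then show ?thesis unfolding lit_equiv_def L_lit_def using agree_atoms by blast
qed

lemma equiv_f_eq:
  assumes "lit_equiv \<phi> M' M"
  shows "{\<psi> \<in> Sub \<phi>. fsat M' \<psi>} = {\<psi> \<in> Sub \<phi>. fsat M \<psi>}"
  using assms atoms_Sub unfolding lit_equiv_def L_lit_def by blast

theorem mainTheorem16:
  fixes M :: "('c, 'r, 'i, 'd) interp" and \<phi> :: "('c, 'r, 'i) formula"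
  assumes "wf_interp M"
  shows "Mod \<phi> - eq_class \<phi> M = (Mod (Cform \<phi> M) :: ('c, 'r, 'i, 'd) interp set)"
proof (cases "fsat M \<phi>")
  case False
  have "eq_class \<phi> M \<inter> Mod \<phi> = {}"
    using False unfolding eq_class_def lit_equiv_def L_lit_def Mod_def by auto
  then show ?thesis using False unfolding Cform_def by auto
next
  case True
  define fM where "fM = {\<psi> \<in> Sub \<phi>. fsat M \<psi>}"
  have qf: "qfilter \<phi> M = ftypes \<phi> - {fM}"
    unfolding qfilter_def qm_def fM_def by simp
  have finF: "finite (ftypes \<phi>)"
  proof -
    have "ftypes \<phi> \<subseteq> Pow (Sub \<phi>)"
      unfolding ftypes_def quasimodel_def model_candidate_def formula_type_def by auto
    then show ?thesis using Sub_finite finite_Pow_iff finite_subset by metis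
  qed
  have fin_lit: "finite (lit f)" if "f \<in> ftypes \<phi>" for f
  proof -
    have "lit f \<subseteq> Sub \<phi>" using that
      unfolding lit_def ftypes_def quasimodel_def model_candidate_def formula_type_def by auto
    then show ?thesis using Sub_finite finite_subset by metis
  qed
  have "(M' \<in> Mod \<phi> - eq_class \<phi> M) = (M' \<in> Mod (Cform \<phi> M))" for M' :: "('c, 'r, 'i, 'd) interp"
  proof
    assume M': "M' \<in> Mod \<phi> - eq_class \<phi> M"
    then have wf': "wf_interp M'" and s': "fsat M' \<phi>" and ne: "\<not> lit_equiv \<phi> M' M"
      unfolding Mod_def eq_class_def by auto
    define f' where "f' = {\<psi> \<in> Sub \<phi>. fsat M' \<psi>}"
    have "f' \<in> ftypes \<phi>" using qm_ftype[OF wf' s'] f'_def by simp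
    moreover have "f' \<noteq> fM"
    proof
      assume "f' = fM"
      then have "lit_equiv \<phi> M' M" unfolding f'_def fM_def by (rule f_eq_equiv)
      then show False using ne by simp
    qed
    ultimately have f'q: "f' \<in> qfilter \<phi> M" using qf by auto
    have "fsat M' (BigConj (lit f'))"
      using fsat_BigConj[OF fin_lit[OF \<open>f' \<in> ftypes \<phi>\<close>]] unfolding lit_def f'_def by auto
    then have "fsat M' (BigDisj ((\<lambda>f. BigConj (lit f)) ` qfilter \<phi> M))"
      using fsat_BigDisj[of "(\<lambda>f. BigConj (lit f)) ` qfilter \<phi> M"] qf finF f'q by auto
    then show "M' \<in> Mod (Cform \<phi> M)"
      using True f'q wf' unfolding Cform_def Mod_def by auto
  next
    assume M': "M' \<in> Mod (Cform \<phi> M)"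
    then have wf': "wf_interp M'" unfolding Mod_def by auto
    have ne: "qfilter \<phi> M \<noteq> {}" using M' True unfolding Cform_def Mod_def by auto
    then have "fsat M' (BigDisj ((\<lambda>f. BigConj (lit f)) ` qfilter \<phi> M))"
      using M' True unfolding Cform_def Mod_def by auto
    then obtain f where f: "f \<in> qfilter \<phi> M" "fsat M' (BigConj (lit f))"
      using fsat_BigDisj[of "(\<lambda>f. BigConj (lit f)) ` qfilter \<phi> M"] qf finF by auto
    have fF: "f \<in> ftypes \<phi>" "f \<noteq> fM" using f(1) qf by auto
    then obtain T oo where qmod: "quasimodel \<phi> T oo f" unfolding ftypes_def by auto
    then have fty: "formula_type \<phi> f" and phif: "\<phi> \<in> f"
      unfolding quasimodel_def model_candidate_def by auto
    have lits: "\<forall>\<psi>\<in>lit f. fsat M' \<psi>" using f(2) fsat_BigConj fin_lit[OF fF(1)] by auto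
    have feq: "f = {\<psi> \<in> Sub \<phi>. fsat M' \<psi>}"
      using ftype_sat[OF fty lits] fty unfolding formula_type_def by auto
    have s': "fsat M' \<phi>" using feq phif by auto
    have "\<not> lit_equiv \<phi> M' M"
    proof
      assume "lit_equiv \<phi> M' M"
      then have "{\<psi> \<in> Sub \<phi>. fsat M' \<psi>} = fM" unfolding fM_def by (rule equiv_f_eq)
      then show False using feq fF(2) by simp
    qed
    then show "M' \<in> Mod \<phi> - eq_class \<phi> M" using wf' s' by (simp add: Mod_def eq_class_def)
  qed
  then show ?thesis by (rule set_eqI)
qed

end
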